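(* Let $C\subseteq\{-1,1\}^n$ be a binary code (in $\pm1$ form), transmitted over a memoryless output-symmetric channel written multiplicatively as $\mathbf{y}=\mathbf{x}\mathbf{z}$, where $\mathbf{x}\in C$ is the transmitted codeword and the noise $\mathbf{z}$ has a distribution independent of $\mathbf{x}$. Consider a faulty iterative message-passing decoder with messages in $\{-Q,\dots,Q\}$ ($Q>0$ an integer) operating as follows: the initial messages are $\mu_{i,j}^{(0)}=\nu_{i,j}^{(0)}=\mu_i^{(0)}$, the channel message of variable node $i$, which has a symmetric distribution; at each iteration $t\ge0$ the ideal next messages are $\nu_{i,j}^{(t+1)}=F_{i,j}(\boldsymbol{\mu}^{(t)},\mu_i^{(0)})$, where $\boldsymbol{\mu}^{(t)}$ is the vector of all variable-to-check messages; and the actual (faulty) messages $\mu_{i,j}^{(t+1)}$ are obtained from $\nu_{i,j}^{(t+1)}$ through a deviation channel with conditional distribution $\phi_{\mu_{i,j}^{(t+1)}\mid\nu_{i,j}^{(t+1)},\mathbf{y}}$. Assume that, conditionally on $\mathbf{y}$, the messages on distinct edges and the channel messages are mutually independent. If the message-update functions $F_{i,j}$ are symmetric with respect to $C$ and the deviations are weakly symmetric, then for every iteration $t\ge0$ and every edge $(i,j)$ the message error probability $\Pr(x_i\mu_{i,j}^{(t)}<0)+\tfrac12\Pr(\mu_{i,j}^{(t)}=0)$ is the same for every transmitted codeword $\mathbf{x}\in C$.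
   Context: $\phi$ denotes a probability (mass/density) function. For $\mathbf{x}\in C$ and a message vector $\boldsymbol{\mu}$ indexed by edges $(k,j)$, $\mathbf{x}\boldsymbol{\mu}$ denotes the vector with entries $x_k\mu_{k,j}$. A message-update function $F_{i,j}$ is symmetric with respect to $C$ if $F_{i,j}(\boldsymbol{\mu},\nu_i^{(0)})=x_iF_{i,j}(\mathbf{x}\boldsymbol{\mu},x_i\nu_i^{(0)})$ for every $\boldsymbol{\mu}$, every $\nu_i^{(0)}$ and every $\mathbf{x}\in C$. A message $\mu$ associated with variable node $i$ has a symmetric distribution if $\phi_{\mu\mid\mathbf{y}}(m\mid\mathbf{x}\mathbf{z})=\phi_{\mu\mid\mathbf{y}}(x_im\mid\mathbf{z})$ for all $m$, $\mathbf{z}$ and $\mathbf{x}\in C$. The deviation model is weakly symmetric if $\phi_{\mu_{i,j}^{(t)}\mid\nu_{i,j}^{(t)},\mathbf{y}}(\mu\mid\nu,\mathbf{x}\mathbf{z})=\phi_{\mu_{i,j}^{(t)}\mid\nu_{i,j}^{(t)},\mathbf{y}}(x_i\mu\mid x_i\nu,\mathbf{z})$ for all $\mu,\nu,\mathbf{z}$, all $\mathbf{x}\in C$, all $t$ and all edges $(i,j)$. *)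

theory Defs
  imports "HOL-Probability.Probability"
begin

text \<open>Variable nodes have type 'v, check nodes type 'c; an edge is a pair (i,j).
  A message vector is a function on edges (set to 0 off the edge set E).
  All distributions below are conditional on the channel output y.\<close>

definition cw_mult :: "('v \<Rightarrow> int) \<Rightarrow> ('v \<Rightarrow> real) \<Rightarrow> ('v \<Rightarrow> real)" where
  "cw_mult x z = (\<lambda>k. of_int (x k) * z k)"

definition msg_mult :: "('v \<Rightarrow> int) \<Rightarrow> ('v \<times> 'c \<Rightarrow> int) \<Rightarrow> ('v \<times> 'c \<Rightarrow> int)" where
  "msg_mult x \<mu> = (\<lambda>(k, j). x k * \<mu> (k, j))"

definition chan_law :: "('v \<Rightarrow> ('v \<Rightarrow> real) \<Rightarrow> int pmf) \<Rightarrow> ('v \<Rightarrow> real) \<Rightarrow> ('v \<Rightarrow> int) pmf" where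
  "chan_law phi0 y = Pi_pmf UNIV 0 (\<lambda>i. phi0 i y)"

text \<open>Joint conditional law (given y) of (channel messages, variable-to-check messages mu^(t)).  For t+1: nu_(i,j)^(t+1) = F (i,j) mu^(t) mu_i^(0), then
  mu_(i,j)^(t+1) is drawn from the deviation channel D (t+1) (i,j) nu y; messages on distinct
  edges and the channel messages are (conditionally on y) mutually independent.\<close>
fun dec_state ::
  "('v \<times> 'c) set \<Rightarrow> ('v \<Rightarrow> ('v \<Rightarrow> real) \<Rightarrow> int pmf)
   \<Rightarrow> ('v \<times> 'c \<Rightarrow> ('v \<times> 'c \<Rightarrow> int) \<Rightarrow> int \<Rightarrow> int)
   \<Rightarrow> (nat \<Rightarrow> 'v \<times> 'c \<Rightarrow> int \<Rightarrow> ('v \<Rightarrow> real) \<Rightarrow> int pmf)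
   \<Rightarrow> nat \<Rightarrow> ('v \<Rightarrow> real) \<Rightarrow> (('v \<Rightarrow> int) \<times> ('v \<times> 'c \<Rightarrow> int)) pmf" where
  "dec_state E phi0 F D 0 y =
     map_pmf (\<lambda>c. (c, (\<lambda>e. if e \<in> E then c (fst e) else 0))) (chan_law phi0 y)"
| "dec_state E phi0 F D (Suc t) y =
     pair_pmf (chan_law phi0 y)
       (Pi_pmf E 0 (\<lambda>e. bind_pmf (dec_state E phi0 F D t y)
                          (\<lambda>(c, m). D (Suc t) e (F e m (c (fst e))) y)))"

definition msg_law where
  "msg_law E phi0 F D t e y = map_pmf (\<lambda>(c, m). m e) (dec_state E phi0 F D t y)"

definition msg_error_prob where
  "msg_error_prob N E phi0 F D t e x =
     (\<integral>z. measure_pmf.prob (msg_law E phi0 F D t e (cw_mult x z)) {m. x (fst e) * m < 0}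
          + 1/2 * measure_pmf.prob (msg_law E phi0 F D t e (cw_mult x z)) {0} \<partial>N)"

end

theory Submission
  imports Defs
begin



lemma Pi_pmf_map_dep:
  assumes "finite A"
  shows "Pi_pmf A 0 (\<lambda>a. map_pmf (f a) (g a)) =
         map_pmf (\<lambda>h a. if a \<in> A then f a (h a) else 0) (Pi_pmf A (0::'b::zero) g)"
proof -
  have "Pi_pmf A 0 (\<lambda>a. map_pmf (f a) (g a)) =
          Pi_pmf A 0 (\<lambda>a. g a \<bind> (\<lambda>x. return_pmf (f a x)))"
    by (simp add: map_pmf_def)
  also have "\<dots> = Pi_pmf A 0 g \<bind> (\<lambda>h. return_pmf (\<lambda>a. if a \<in> A then f a (h a) else 0))"
    by (subst Pi_pmf_bind[where d' = 0]) (auto simp: assms)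
  also have "\<dots> = map_pmf (\<lambda>h a. if a \<in> A then f a (h a) else 0) (Pi_pmf A 0 g)"
    unfolding map_pmf_def by simp
  finally show ?thesis .
qed

lemma sq1: "s \<in> {-1, 1::int} \<Longrightarrow> s * (s * m) = m"
  by auto

lemma map_flip_pmf:
  assumes "s \<in> {-1, 1::int}" "\<And>m. pmf p m = pmf q (s * m)"
  shows "p = map_pmf (\<lambda>m. s * m) q"
proof (rule pmf_eqI)
  fix m
  have inj: "inj (\<lambda>m. s * m)" using assms(1) by (auto intro: injI)
  have "pmf (map_pmf (\<lambda>m. s * m) q) m = pmf (map_pmf (\<lambda>m. s * m) q) (s * (s * m))"
    using sq1[OF assms(1), of m] by (simp only:)
  also have "\<dots> = pmf q (s * m)" by (rule pmf_map_inj'[OF inj])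
  finally show "pmf p m = pmf (map_pmf (\<lambda>m. s * m) q) m" using assms(2) by simp
qed

lemma chan_flip:
  fixes x :: "'v::finite \<Rightarrow> int"
  assumes x: "\<And>k. x k \<in> {-1,1}"
    and sym: "\<And>i m. pmf (phi0 i (cw_mult x z)) m = pmf (phi0 i z) (x i * m)"
  shows "chan_law phi0 (cw_mult x z) = map_pmf (\<lambda>c k. x k * c k) (chan_law phi0 z)"
proof -
  have "chan_law phi0 (cw_mult x z) = Pi_pmf UNIV 0 (\<lambda>i. map_pmf (\<lambda>m. x i * m) (phi0 i z))"
    unfolding chan_law_def by (intro Pi_pmf_cong refl map_flip_pmf x sym)
  also have "\<dots> = map_pmf (\<lambda>c k. x k * c k) (chan_law phi0 z)"
    unfolding chan_law_def by (subst Pi_pmf_map_dep) auto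
  finally show ?thesis .
qed

lemma dec_inv:
  fixes E :: "('v::finite \<times> 'c::finite) set"
  assumes chan_range: "\<And>i y. set_pmf (phi0 i y) \<subseteq> {-Q..Q}"
    and D_range: "\<And>t e \<nu> y. set_pmf (D t e \<nu> y) \<subseteq> {-Q..Q}"
    and cm: "(c, m) \<in> set_pmf (dec_state E phi0 F D t y)"
  shows "(\<forall>k. \<bar>c k\<bar> \<le> Q) \<and> (\<forall>e'. e' \<notin> E \<longrightarrow> m e' = 0) \<and> (\<forall>e'\<in>E. \<bar>m e'\<bar> \<le> Q)"
proof -
  have ch: "\<forall>k. \<bar>c k\<bar> \<le> Q" if "c \<in> set_pmf (chan_law phi0 y)" for c
  proof
    fix k
    have "c \<in> PiE_dflt UNIV 0 (set_pmf \<circ> (\<lambda>i. phi0 i y))"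
      using that set_Pi_pmf_subset'[of "UNIV::'v set" 0 "\<lambda>i. phi0 i y"] unfolding chan_law_def by auto
    hence "c k \<in> set_pmf (phi0 k y)" by (auto simp: PiE_dflt_def)
    thus "\<bar>c k\<bar> \<le> Q" using chan_range[of k y] by (auto simp: subset_iff)
  qed
  show ?thesis
  proof (cases t)
    case 0
    with cm show ?thesis using ch by auto
  next
    case (Suc t')
    from cm Suc have c: "c \<in> set_pmf (chan_law phi0 y)" and
      m: "m \<in> set_pmf (Pi_pmf E 0 (\<lambda>e. bind_pmf (dec_state E phi0 F D t' y)
                          (\<lambda>(c, m). D (Suc t') e (F e m (c (fst e))) y)))"
      by auto
    from m have "m \<in> PiE_dflt E 0 (set_pmf \<circ> (\<lambda>e. bind_pmf (dec_state E phi0 F D t' y)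
                          (\<lambda>(c, m). D (Suc t') e (F e m (c (fst e))) y)))"
      by (rule subsetD[OF set_Pi_pmf_subset'[OF finite]])
    hence "(\<forall>e'. e' \<notin> E \<longrightarrow> m e' = 0) \<and> (\<forall>e'\<in>E. \<bar>m e'\<bar> \<le> Q)"
      using D_range by (fastforce simp: PiE_dflt_def)
    thus ?thesis using ch c by auto
  qed
qed


lemma dec_flip:
  fixes E :: "('v::finite \<times> 'c::finite) set" and x :: "'v \<Rightarrow> int"
  assumes x: "\<And>k. x k \<in> {-1,1}"
    and chan_range: "\<And>i y. set_pmf (phi0 i y) \<subseteq> {-Q..Q}"
    and chan_sym: "\<And>i m. pmf (phi0 i (cw_mult x z)) m = pmf (phi0 i z) (x i * m)"
    and F_sym: "\<And>i j \<mu> c. \<lbrakk>(i, j) \<in> E; \<forall>e'. e' \<notin> E \<longrightarrow> \<mu> e' = 0;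
           \<forall>e'\<in>E. \<bar>\<mu> e'\<bar> \<le> Q; \<bar>c\<bar> \<le> Q\<rbrakk>
           \<Longrightarrow> F (i, j) \<mu> c = x i * F (i, j) (msg_mult x \<mu>) (x i * c)"
    and D_range: "\<And>t e \<nu> y. set_pmf (D t e \<nu> y) \<subseteq> {-Q..Q}"
    and D_weak_sym: "\<And>t i j \<mu> \<nu>. (i, j) \<in> E \<Longrightarrow>
           pmf (D t (i, j) \<nu> (cw_mult x z)) \<mu> = pmf (D t (i, j) (x i * \<nu>) z) (x i * \<mu>)"
  shows "dec_state E phi0 F D t (cw_mult x z) =
         map_pmf (\<lambda>(c, m). (\<lambda>k. x k * c k, msg_mult x m)) (dec_state E phi0 F D t z)"
proof (induction t)
  case 0
  show ?case
    by (simp add: chan_flip[OF x chan_sym] map_pmf_comp msg_mult_def case_prod_beta)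
       (intro map_pmf_cong refl, auto)
next
  case (Suc t)
  let ?S = "dec_state E phi0 F D t z"
  have e: "bind_pmf (dec_state E phi0 F D t (cw_mult x z))
            (\<lambda>(c, m). D (Suc t) e (F e m (c (fst e))) (cw_mult x z))
         = map_pmf (\<lambda>v. x (fst e) * v) (bind_pmf ?S (\<lambda>(c, m). D (Suc t) e (F e m (c (fst e))) z))"
    if eE: "e \<in> E" for e
  proof -
    obtain i j where ij: "e = (i, j)" by force
    have "bind_pmf (dec_state E phi0 F D t (cw_mult x z))
            (\<lambda>(c, m). D (Suc t) e (F e m (c (fst e))) (cw_mult x z))
        = bind_pmf ?S (\<lambda>(c, m). D (Suc t) e (F e (msg_mult x m) (x i * c i)) (cw_mult x z))"
      unfolding Suc map_pmf_def bind_assoc_pmf bind_return_pmf by (simp add: case_prod_beta ij split_beta')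
    also have "\<dots> = bind_pmf ?S (\<lambda>(c, m). map_pmf (\<lambda>v. x i * v) (D (Suc t) e (F e m (c i)) z))"
    proof (intro bind_pmf_cong refl, clarify)
      fix c m assume cm: "(c, m) \<in> set_pmf ?S"
      note inv = dec_inv[OF chan_range D_range cm]
      have Fe: "F (i, j) m (c i) = x i * F (i, j) (msg_mult x m) (x i * c i)"
        by (rule F_sym) (use eE ij inv in auto)
      show "D (Suc t) e (F e (msg_mult x m) (x i * c i)) (cw_mult x z) =
            map_pmf (\<lambda>v. x i * v) (D (Suc t) e (F e m (c i)) z)"
        unfolding ij by (subst Fe) (rule map_flip_pmf[OF x D_weak_sym[OF eE[unfolded ij]]])
    qed
    also have "\<dots> = map_pmf (\<lambda>v. x (fst e) * v) (bind_pmf ?S (\<lambda>(c, m). D (Suc t) e (F e m (c (fst e))) z))"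
      by (simp add: map_bind_pmf case_prod_beta ij split_beta')
    finally show ?thesis .
  qed
  have "dec_state E phi0 F D (Suc t) (cw_mult x z) =
        pair_pmf (map_pmf (\<lambda>c k. x k * c k) (chan_law phi0 z))
          (Pi_pmf E 0 (\<lambda>e. map_pmf (\<lambda>v. x (fst e) * v)
             (bind_pmf ?S (\<lambda>(c, m). D (Suc t) e (F e m (c (fst e))) z))))"
    by (simp only: dec_state.simps chan_flip[OF x chan_sym]) (intro arg_cong[where f="pair_pmf _"] Pi_pmf_cong refl e)
  also have "\<dots> = pair_pmf (map_pmf (\<lambda>c k. x k * c k) (chan_law phi0 z))
          (map_pmf (\<lambda>h a. if a \<in> E then x (fst a) * h a else 0)
             (Pi_pmf E 0 (\<lambda>e. bind_pmf ?S (\<lambda>(c, m). D (Suc t) e (F e m (c (fst e))) z))))"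
    by (subst Pi_pmf_map_dep) auto
  also have "\<dots> = map_pmf (\<lambda>(c, h). (\<lambda>k. x k * c k, \<lambda>a. if a \<in> E then x (fst a) * h a else 0))
           (dec_state E phi0 F D (Suc t) z)"
    by (simp only: dec_state.simps map_pair)
  also have "\<dots> = map_pmf (\<lambda>(c, m). (\<lambda>k. x k * c k, msg_mult x m)) (dec_state E phi0 F D (Suc t) z)"
  proof (intro map_pmf_cong refl)
    fix cm assume cm0: "cm \<in> set_pmf (dec_state E phi0 F D (Suc t) z)"
    obtain c m where cme: "cm = (c, m)" by force
    have cm: "(c, m) \<in> set_pmf (dec_state E phi0 F D (Suc t) z)" using cm0 cme by simp
    note inv = dec_inv[OF chan_range D_range cm]
    show "(case cm of (c, h) \<Rightarrow> (\<lambda>k. x k * c k, \<lambda>a. if a \<in> E then x (fst a) * h a else 0)) = (case cm of (c, m) \<Rightarrow> (\<lambda>k. x k * c k, msg_mult x m))"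
      using inv unfolding cme by (auto simp: msg_mult_def fun_eq_iff)
  qed
  finally show ?case .
qed

lemma err_indep:
  fixes E :: "('v::finite \<times> 'c::finite) set" and x :: "'v \<Rightarrow> int"
  assumes x: "\<And>k. x k \<in> {-1,1}"
    and chan_range: "\<And>i y. set_pmf (phi0 i y) \<subseteq> {-Q..Q}"
    and chan_sym: "\<And>i m z. pmf (phi0 i (cw_mult x z)) m = pmf (phi0 i z) (x i * m)"
    and F_sym: "\<And>i j \<mu> c. \<lbrakk>(i, j) \<in> E; \<forall>e'. e' \<notin> E \<longrightarrow> \<mu> e' = 0;
           \<forall>e'\<in>E. \<bar>\<mu> e'\<bar> \<le> Q; \<bar>c\<bar> \<le> Q\<rbrakk>
           \<Longrightarrow> F (i, j) \<mu> c = x i * F (i, j) (msg_mult x \<mu>) (x i * c)"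
    and D_range: "\<And>t e \<nu> y. set_pmf (D t e \<nu> y) \<subseteq> {-Q..Q}"
    and D_weak_sym: "\<And>t i j \<mu> \<nu> z. (i, j) \<in> E \<Longrightarrow>
           pmf (D t (i, j) \<nu> (cw_mult x z)) \<mu> = pmf (D t (i, j) (x i * \<nu>) z) (x i * \<mu>)"
  shows "msg_error_prob N E phi0 F D t e x =
     (\<integral>z. measure_pmf.prob (msg_law E phi0 F D t e z) {m. m < 0}
          + 1/2 * measure_pmf.prob (msg_law E phi0 F D t e z) {0} \<partial>N)"
  unfolding msg_error_prob_def
proof (intro Bochner_Integration.integral_cong refl)
  fix z
  have ml: "msg_law E phi0 F D t e (cw_mult x z) = map_pmf (\<lambda>v. x (fst e) * v) (msg_law E phi0 F D t e z)"
  proof -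
    have df: "dec_state E phi0 F D t (cw_mult x z) =
         map_pmf (\<lambda>(c, m). (\<lambda>k. x k * c k, msg_mult x m)) (dec_state E phi0 F D t z)"
      by (rule dec_flip[where Q=Q]) (fact x chan_range chan_sym F_sym D_range D_weak_sym)+
    show ?thesis unfolding msg_law_def df
      by (simp add: map_pmf_comp case_prod_beta msg_mult_def)
  qed
  have s: "x (fst e) \<in> {-1,1}" by (rule x)
  have 1: "{v. x (fst e) * (x (fst e) * v) < 0} = {v. v < 0}" using sq1[OF s] by (simp only:)
  have 2: "{v. x (fst e) = 0 \<or> v = 0} = {0}" using s by auto
  show "measure_pmf.prob (msg_law E phi0 F D t e (cw_mult x z)) {m. x (fst e) * m < 0} +
        1 / 2 * measure_pmf.prob (msg_law E phi0 F D t e (cw_mult x z)) {0} =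
        measure_pmf.prob (msg_law E phi0 F D t e z) {m. m < 0} +
        1 / 2 * measure_pmf.prob (msg_law E phi0 F D t e z) {0}"
    unfolding ml measure_map_pmf by (simp add: vimage_def 1 2)
qed

theorem lemma2:
  fixes C :: "('v::finite \<Rightarrow> int) set"
    and N :: "('v \<Rightarrow> real) measure"
    and E :: "('v \<times> 'c::finite) set"
    and Q :: int
    and phi0 :: "'v \<Rightarrow> ('v \<Rightarrow> real) \<Rightarrow> int pmf"
    and F :: "'v \<times> 'c \<Rightarrow> ('v \<times> 'c \<Rightarrow> int) \<Rightarrow> int \<Rightarrow> int"
    and D :: "nat \<Rightarrow> 'v \<times> 'c \<Rightarrow> int \<Rightarrow> ('v \<Rightarrow> real) \<Rightarrow> int pmf"
  assumes code: "\<And>x k. x \<in> C \<Longrightarrow> x k \<in> {-1, 1}"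
    and Qpos: "Q > 0"
    and noise: "prob_space N"
    and memoryless: "prob_space.indep_vars N (\<lambda>_. borel) (\<lambda>k z. z k) UNIV"
    and chan_range: "\<And>i y. set_pmf (phi0 i y) \<subseteq> {-Q..Q}"
    and chan_sym: "\<And>i m z x. x \<in> C \<Longrightarrow>
           pmf (phi0 i (cw_mult x z)) m = pmf (phi0 i z) (x i * m)"
    and F_range: "\<And>e \<mu> c. \<lbrakk>\<forall>e'. e' \<notin> E \<longrightarrow> \<mu> e' = 0; \<forall>e'\<in>E. \<bar>\<mu> e'\<bar> \<le> Q; \<bar>c\<bar> \<le> Q\<rbrakk>
           \<Longrightarrow> \<bar>F e \<mu> c\<bar> \<le> Q"
    and F_sym: "\<And>i j \<mu> c x. \<lbrakk>(i, j) \<in> E; x \<in> C; \<forall>e'. e' \<notin> E \<longrightarrow> \<mu> e' = 0;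
           \<forall>e'\<in>E. \<bar>\<mu> e'\<bar> \<le> Q; \<bar>c\<bar> \<le> Q\<rbrakk>
           \<Longrightarrow> F (i, j) \<mu> c = x i * F (i, j) (msg_mult x \<mu>) (x i * c)"
    and D_range: "\<And>t e \<nu> y. set_pmf (D t e \<nu> y) \<subseteq> {-Q..Q}"
    and D_weak_sym: "\<And>t i j \<mu> \<nu> z x. \<lbrakk>(i, j) \<in> E; x \<in> C\<rbrakk> \<Longrightarrow>
           pmf (D t (i, j) \<nu> (cw_mult x z)) \<mu> = pmf (D t (i, j) (x i * \<nu>) z) (x i * \<mu>)"
    and edge: "e \<in> E"
    and cw: "x \<in> C" "x' \<in> C"
  shows "msg_error_prob N E phi0 F D t e x = msg_error_prob N E phi0 F D t e x'"

proof -
  have "msg_error_prob N E phi0 F D t e y =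
     (\<integral>z. measure_pmf.prob (msg_law E phi0 F D t e z) {m. m < 0}
          + 1/2 * measure_pmf.prob (msg_law E phi0 F D t e z) {0} \<partial>N)" if y: "y \<in> C" for y
    by (rule err_indep[where Q=Q]) (use y code chan_range chan_sym F_sym D_range D_weak_sym in auto)
  from this[OF cw(1)] this[OF cw(2)] show ?thesis by simp
qed

end
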